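(* Let $A_1,\dots,A_m\in\mathbb{S}^n$, $b\in\mathbb{R}^m$, $C\in\mathbb{S}^n$, and let $p$ be such that Assumption 1 holds, with associated dimension $m'$. Let $Y\in\mathcal{M}_p$ be a second-order critical point of (P) and $X=YY^\top$ (so $X$ lies in the relative interior of the face $\mathcal{F}_X$). If $\operatorname{rank}(Y)=p$, then $S=S(Y)$ has at most $\left\lfloor\frac{\dim\mathcal{F}_X-\Delta}{p}\right\rfloor$ negative eigenvalues, where $\Delta=\frac{p(p+1)}{2}-m'$. In particular, if $\dim\mathcal{F}_X<\Delta+p$, then $S$ is positive semidefinite and $X$ is globally optimal for (SDP) and $Y$ is globally optimal for (P).
   Context: $\mathbb{S}^n$: real symmetric $n\times n$ matrices; $\langle U,V\rangle=\operatorname{tr}(U^\top V)$. $\mathcal{A}(X)_i=\langle A_i,X\rangle$, $\mathcal{A}^*(\nu)=\sum_i\nu_iA_i$. $\mathcal{C}=\{X\in\mathbb{S}^n:\mathcal{A}(X)=b,\ X\succeq0\}$ (non-empty); (SDP): minimize $\langle C,X\rangle$ over $\mathcal{C}$. $\mathcal{M}_p=\{Y\in\mathbb{R}^{n\times p}:\mathcal{A}(YY^\top)=b\}$; (P): minimize $\langle CY,Y\rangle$ over $\mathcal{M}_p$. Assumption 1 (for $p$ with $\mathcal{M}_p\ne\emptyset$): either (a) $A_1Y,\dots,A_mY$ are linearly independent for all $Y\in\mathcal{M}_p$, or (b) $\operatorname{span}\{A_1Y,\dots,A_mY\}$ has constant dimension for all $Y$ in an open neighborhood of $\mathcal{M}_p$;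 $m'$ is the dimension of this span for $Y\in\mathcal{M}_p$. For $Y\in\mathcal{M}_p$: $T_Y=\{\dot Y:\langle A_iY,\dot Y\rangle=0\ \forall i\}$; $G_{ij}=\langle A_iY,A_jY\rangle$, $\mu=G^\dagger\mathcal{A}(CYY^\top)$, $S(Y)=C-\mathcal{A}^*(\mu)$. $Y$ is second-order critical if $S(Y)Y=0$ and $\langle\dot Y,S(Y)\dot Y\rangle\ge0$ for all $\dot Y\in T_Y$. A face of convex $\mathcal{C}$ is a convex subset $\mathcal{F}$ such that every closed segment in $\mathcal{C}$ with a relative interior point in $\mathcal{F}$ has both endpoints in $\mathcal{F}$; $\mathcal{F}_X$ is the unique face containing $X$ in its relative interior; its dimension is that of its affine hull. *)

theory Defs
  imports "HOL-Analysis.Analysis" "HOL-Computational_Algebra.Polynomial"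
begin

definition frob :: "real^'c^'r \<Rightarrow> real^'c^'r \<Rightarrow> real" where
  "frob U V = (\<Sum>i\<in>UNIV. \<Sum>j\<in>UNIV. U$i$j * V$i$j)"

definition symmetric_mat :: "real^'n^'n \<Rightarrow> bool" where
  "symmetric_mat M \<longleftrightarrow> transpose M = M"

definition psd :: "real^'n^'n \<Rightarrow> bool" where
  "psd M \<longleftrightarrow> symmetric_mat M \<and> (\<forall>x. 0 \<le> x \<bullet> (M *v x))"

definition opA :: "('m \<Rightarrow> real^'n^'n) \<Rightarrow> real^'n^'n \<Rightarrow> real^'m" where
  "opA A X = (\<chi> i. frob (A i) X)"

definition opA_adj :: "('m::finite \<Rightarrow> real^'n^'n) \<Rightarrow> real^'m \<Rightarrow> real^'n^'n" where
  "opA_adj A \<nu> = (\<Sum>i\<in>UNIV. (\<nu>$i) *\<^sub>R A i)"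

definition sdp_feasible :: "('m \<Rightarrow> real^'n^'n) \<Rightarrow> real^'m \<Rightarrow> (real^'n^'n) set" where
  "sdp_feasible A b = {X. symmetric_mat X \<and> opA A X = b \<and> psd X}"

text \<open>The manifold M_p (p = CARD('p)).\<close>
definition Mp :: "('m \<Rightarrow> real^'n^'n) \<Rightarrow> real^'m \<Rightarrow> (real^'p^'n) set" where
  "Mp A b = {Y. opA A (Y ** transpose Y) = b}"

definition span_AY :: "('m \<Rightarrow> real^'n^'n) \<Rightarrow> real^'p^'n \<Rightarrow> (real^'p^'n) set" where
  "span_AY A Y = span (range (\<lambda>i. A i ** Y))"

text \<open>Assumption 1, for the given p (encoded by the type 'p).\<close>
definition assumption1 :: "('m::finite \<Rightarrow> real^'n^'n) \<Rightarrow> real^'m \<Rightarrow> 'p::finite itself \<Rightarrow> bool" where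
  "assumption1 A b _ \<longleftrightarrow>
     (\<forall>Y\<in>(Mp A b :: (real^'p^'n) set).
        \<forall>c::'m \<Rightarrow> real. (\<Sum>i\<in>UNIV. c i *\<^sub>R (A i ** Y)) = 0 \<longrightarrow> (\<forall>i. c i = 0))
   \<or> (\<exists>U::(real^'p^'n) set. open U \<and> Mp A b \<subseteq> U \<and>
        (\<exists>d. \<forall>Y\<in>U. dim (span_AY A Y) = d))"

definition tangent_space :: "('m \<Rightarrow> real^'n^'n) \<Rightarrow> real^'p^'n \<Rightarrow> (real^'p^'n) set" where
  "tangent_space A Y = {Yd. \<forall>i. frob (A i ** Y) Yd = 0}"

definition pinv :: "real^'m^'m \<Rightarrow> real^'m^'m" where
  "pinv G = (THE P. G ** P ** G = G \<and> P ** G ** P = P \<and>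
                    transpose (G ** P) = G ** P \<and> transpose (P ** G) = P ** G)"

definition gram :: "('m \<Rightarrow> real^'n^'n) \<Rightarrow> real^'p^'n \<Rightarrow> real^'m^'m" where
  "gram A Y = (\<chi> i j. frob (A i ** Y) (A j ** Y))"

definition mult_mu :: "('m::finite \<Rightarrow> real^'n^'n) \<Rightarrow> real^'n^'n \<Rightarrow> real^'p^'n \<Rightarrow> real^'m" where
  "mult_mu A C Y = pinv (gram A Y) *v opA A (C ** Y ** transpose Y)"

definition Smat :: "('m::finite \<Rightarrow> real^'n^'n) \<Rightarrow> real^'n^'n \<Rightarrow> real^'p^'n \<Rightarrow> real^'n^'n" where
  "Smat A C Y = C - opA_adj A (mult_mu A C Y)"

definition second_order_critical ::
  "('m::finite \<Rightarrow> real^'n^'n) \<Rightarrow> real^'n^'n \<Rightarrow> real^'p^'n \<Rightarrow> bool" where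
  "second_order_critical A C Y \<longleftrightarrow>
     Smat A C Y ** Y = 0 \<and>
     (\<forall>Yd\<in>tangent_space A Y. 0 \<le> frob Yd (Smat A C Y ** Yd))"

definition face_of_point :: "('a::euclidean_space) set \<Rightarrow> 'a \<Rightarrow> 'a set" where
  "face_of_point S X = (THE F. F face_of S \<and> X \<in> rel_interior F)"

definition charpoly :: "real^'n^'n \<Rightarrow> real poly" where
  "charpoly M = det (\<chi> i j. (if i = j then [:0, 1:] else 0) - [:M$i$j:])"

definition num_neg_eig :: "real^'n^'n \<Rightarrow> nat" where
  "num_neg_eig M = (\<Sum>t\<in>{t. t < 0 \<and> poly (charpoly M) t = 0}. order t (charpoly M))"

end

theory Submission
  imports Defs
begin

lemma frob_inner: "frob U V = U \<bullet> V"
  by (simp add: frob_def inner_vec_def)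

lemma sym_entry: "symmetric_mat S \<Longrightarrow> S$i$j = S$j$i"
  unfolding symmetric_mat_def by (metis transpose_def vec_lambda_beta)

lemma sym_inner_vec:
  assumes "symmetric_mat S" shows "x \<bullet> (S *v y) = (S *v x) \<bullet> y"
proof -
  have "x \<bullet> (S *v y) = (x v* S) \<bullet> y" by (simp add: dot_lmul_matrix)
  also have "x v* S = S *v x" using assms vector_transpose_matrix[of x S]
    unfolding symmetric_mat_def by metis
  finally show ?thesis using assms by (simp add: symmetric_mat_def)
qed

lemma sym_inner_mat:
  fixes X Z :: "real^'p^'n"
  assumes "symmetric_mat S" shows "X \<bullet> (S ** Z) = (S ** X) \<bullet> Z"
proof -
  have "X \<bullet> (S ** Z) = (\<Sum>i\<in>UNIV. \<Sum>j\<in>UNIV. \<Sum>k\<in>UNIV. X$i$j * (S$i$k * Z$k$j))"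
    by (simp add: inner_vec_def matrix_matrix_mult_def sum_distrib_left)
  also have "\<dots> = (\<Sum>i\<in>UNIV. \<Sum>k\<in>UNIV. \<Sum>j\<in>UNIV. X$i$j * (S$i$k * Z$k$j))"
    by (rule sum.cong[OF refl], rule sum.swap)
  also have "\<dots> = (\<Sum>k\<in>UNIV. \<Sum>i\<in>UNIV. \<Sum>j\<in>UNIV. X$i$j * (S$i$k * Z$k$j))"
    by (rule sum.swap)
  also have "\<dots> = (\<Sum>k\<in>UNIV. \<Sum>j\<in>UNIV. \<Sum>i\<in>UNIV. X$i$j * (S$i$k * Z$k$j))"
    by (rule sum.cong[OF refl], rule sum.swap)
  also have "\<dots> = (S ** X) \<bullet> Z"
    using sym_entry[OF assms]
    by (simp add: inner_vec_def matrix_matrix_mult_def sum_distrib_left sum_distrib_right mult_ac)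
  finally show ?thesis .
qed

lemma frob_trace:
  fixes A :: "real^'n^'n" and P Q :: "real^'p^'n"
  shows "frob A (P ** transpose Q) = frob (A ** Q) P"
proof -
  have "frob A (P ** transpose Q) = (\<Sum>a\<in>UNIV. \<Sum>b\<in>UNIV. \<Sum>c\<in>UNIV. A$a$b * (P$a$c * Q$b$c))"
    by (simp add: frob_def matrix_matrix_mult_def transpose_def sum_distrib_left)
  also have "\<dots> = (\<Sum>a\<in>UNIV. \<Sum>c\<in>UNIV. \<Sum>b\<in>UNIV. A$a$b * (P$a$c * Q$b$c))"
    by (rule sum.cong[OF refl], rule sum.swap)
  also have "\<dots> = frob (A ** Q) P"
    by (simp add: frob_def matrix_matrix_mult_def sum_distrib_left sum_distrib_right mult_ac)
  finally show ?thesis .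
qed

lemma frob_transpose: "frob A (transpose D) = frob (transpose A) (D::real^'n^'n)"
  unfolding frob_def transpose_def by (simp, rule sum.swap)

lemma frob_add: "frob A (X + Z) = frob A X + frob A Z"
  by (simp add: frob_def distrib_left sum.distrib)
lemma frob_scale: "frob A (c *\<^sub>R X) = c * frob A X"
  by (simp add: frob_def sum_distrib_left mult_ac)
lemma frob_diff: "frob A (X - Z) = frob A X - frob A Z"
  by (simp add: frob_def right_diff_distrib sum_subtractf)


lemma face_exists:
  fixes S :: "'a::euclidean_space set"
  assumes cS: "convex S" and xS: "x \<in> S"
  shows "\<exists>F. F face_of S \<and> x \<in> rel_interior F"
proof -
  define F0 where "F0 = \<Inter>{F. F face_of S \<and> x \<in> F}"
  have fam: "{F. F face_of S \<and> x \<in> F} \<noteq> {}" using face_of_refl[OF cS] xS by blast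
  have F0f: "F0 face_of S" unfolding F0_def by (rule face_of_Inter[OF fam]) blast
  have xF0: "x \<in> F0" by (auto simp: F0_def)
  have min: "F0 \<subseteq> F" if "F face_of S" "x \<in> F" for F using that by (auto simp: F0_def)
  have "x \<in> rel_interior F0"
  proof (rule ccontr)
    assume nx: "x \<notin> rel_interior F0"
    have cF0: "convex F0" using F0f face_of_imp_convex by blast
    obtain a where a: "a \<noteq> 0" "\<And>y. y \<in> F0 \<Longrightarrow> a \<bullet> x \<le> a \<bullet> y"
        "\<And>y. y \<in> rel_interior F0 \<Longrightarrow> a \<bullet> x < a \<bullet> y"
      using supporting_hyperplane_rel_boundary[OF cF0 xF0 nx] by blast
    have F1: "(F0 \<inter> {y. a \<bullet> y = a \<bullet> x}) face_of F0"
      by (rule face_of_Int_supporting_hyperplane_ge[OF cF0]) (use a in auto)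
    have "(F0 \<inter> {y. a \<bullet> y = a \<bullet> x}) face_of S" using face_of_trans[OF F1 F0f] .
    then have sub: "F0 \<subseteq> F0 \<inter> {y. a \<bullet> y = a \<bullet> x}" using min xF0 by blast
    have "rel_interior F0 \<noteq> {}" using rel_interior_eq_empty cF0 xF0 by blast
    then obtain y where y: "y \<in> rel_interior F0" by blast
    then have "y \<in> F0" using rel_interior_subset by blast
    then show False using sub a(3)[OF y] by auto
  qed
  then show ?thesis using F0f by blast
qed

lemma face_of_point_props:
  fixes S :: "'a::euclidean_space set"
  assumes cS: "convex S" and xS: "x \<in> S"
  shows "face_of_point S x face_of S \<and> x \<in> rel_interior (face_of_point S x)"
proof -
  obtain F where F: "F face_of S \<and> x \<in> rel_interior F" using face_exists[OF cS xS] by blast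
  have "\<exists>!F. F face_of S \<and> x \<in> rel_interior F"
  proof (rule ex1I[of _ F])
    show "F face_of S \<and> x \<in> rel_interior F" by (rule F)
  next
    fix G assume "G face_of S \<and> x \<in> rel_interior G"
    then show "G = F" using F face_of_eq by blast
  qed
  then show ?thesis unfolding face_of_point_def by (rule theI')
qed


lemma symmetric_mat_iff: "symmetric_mat X \<longleftrightarrow> (\<forall>i j. X$i$j = X$j$i)"
  unfolding symmetric_mat_def transpose_def by (auto simp: vec_eq_iff)

lemma mm_add_r: "((A::real^'b^'a) + B) ** (C::real^'c^'b) = A ** C + B ** C"
  by (simp add: matrix_matrix_mult_def vec_eq_iff sum.distrib distrib_right)
lemma mm_add_l: "(A::real^'b^'a) ** ((B::real^'c^'b) + C) = A ** B + A ** C"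
  by (simp add: matrix_matrix_mult_def vec_eq_iff sum.distrib distrib_left)
lemma mm_diff_r: "((A::real^'b^'a) - B) ** (C::real^'c^'b) = A ** C - B ** C"
  by (simp add: matrix_matrix_mult_def vec_eq_iff sum_subtractf left_diff_distrib)
lemma mm_diff_l: "(A::real^'b^'a) ** ((B::real^'c^'b) - C) = A ** B - A ** C"
  by (simp add: matrix_matrix_mult_def vec_eq_iff sum_subtractf right_diff_distrib)
lemma mm_scale_l: "(c *\<^sub>R (A::real^'b^'a)) ** (B::real^'c^'b) = c *\<^sub>R (A ** B)"
  by (simp add: matrix_matrix_mult_def vec_eq_iff sum_distrib_left mult_ac)
lemma mm_scale_r: "(A::real^'b^'a) ** (c *\<^sub>R (B::real^'c^'b)) = c *\<^sub>R (A ** B)"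
  by (simp add: matrix_matrix_mult_def vec_eq_iff sum_distrib_left mult_ac)
lemma mv_scale: "(c *\<^sub>R (M::real^'b^'a)) *v z = c *\<^sub>R (M *v z)"
  by (simp add: matrix_vector_mult_def vec_eq_iff sum_distrib_left mult_ac)

lemma transpose_add': "transpose ((A::real^'b^'a) + B) = transpose A + transpose B"
  by (simp add: transpose_def vec_eq_iff)
lemma transpose_scale': "transpose (c *\<^sub>R (A::real^'b^'a)) = c *\<^sub>R transpose A"
  by (simp add: transpose_def vec_eq_iff)

lemma convex_sdp: fixes A :: "'m::finite \<Rightarrow> real^'n^'n" shows "convex (sdp_feasible A b)"
  unfolding convex_def
proof (intro ballI allI impI)
  fix X Z :: "real^'n^'n" and u v :: real
  assume X: "X \<in> sdp_feasible A b" and Z: "Z \<in> sdp_feasible A b" and uv: "0 \<le> u" "0 \<le> v" "u + v = 1"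
  have s: "symmetric_mat (u *\<^sub>R X + v *\<^sub>R Z)"
    using X Z by (simp add: sdp_feasible_def symmetric_mat_iff)
  have o: "opA A (u *\<^sub>R X + v *\<^sub>R Z) = b"
  proof -
    have "opA A (u *\<^sub>R X + v *\<^sub>R Z) = u *\<^sub>R opA A X + v *\<^sub>R opA A Z"
      by (simp add: opA_def vec_eq_iff frob_add frob_scale)
    also have "\<dots> = (u + v) *\<^sub>R b" using X Z by (simp add: sdp_feasible_def scaleR_add_left)
    finally show ?thesis using uv by simp
  qed
  have p: "psd (u *\<^sub>R X + v *\<^sub>R Z)"
  proof -
    have "0 \<le> x \<bullet> ((u *\<^sub>R X + v *\<^sub>R Z) *v x)" for x
    proof -
      have "x \<bullet> ((u *\<^sub>R X + v *\<^sub>R Z) *v x) = u * (x \<bullet> (X *v x)) + v * (x \<bullet> (Z *v x))"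
        by (simp add: matrix_vector_mult_add_rdistrib mv_scale inner_add_right)
      moreover have "0 \<le> x \<bullet> (X *v x)" "0 \<le> x \<bullet> (Z *v x)"
        using X Z by (auto simp: sdp_feasible_def psd_def)
      ultimately show ?thesis using uv by simp
    qed
    then show ?thesis using s by (simp add: psd_def)
  qed
  show "u *\<^sub>R X + v *\<^sub>R Z \<in> sdp_feasible A b" using s o p by (simp add: sdp_feasible_def)
qed

lemma quad_congr:
  fixes Y :: "real^'p^'n" and N :: "real^'p^'p"
  shows "x \<bullet> ((Y ** N ** transpose Y) *v x) = (transpose Y *v x) \<bullet> (N *v (transpose Y *v x))"
proof -
  have "(Y ** N ** transpose Y) *v x = Y *v (N *v (transpose Y *v x))"
    by (simp only: matrix_vector_mul_assoc matrix_mul_assoc)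
  then show ?thesis by (simp only: dot_lmul_matrix[symmetric] transpose_matrix_vector)
qed

lemma psd_gram: "psd (Y ** transpose (Y::real^'p^'n))"
proof -
  have "x \<bullet> ((Y ** transpose Y) *v x) = (transpose Y *v x) \<bullet> (transpose Y *v x)" for x
    using quad_congr[of x Y "mat 1"] by simp
  then show ?thesis
    by (simp add: psd_def symmetric_mat_def matrix_transpose_mul)
qed

lemma face_dir:
  assumes F: "F face_of K" and XF: "X \<in> F" and p: "X + D \<in> K" and m: "X - D \<in> K"
  shows "D \<in> span ((+) (- X) ` F)"
proof (cases "D = 0")
  case True then show ?thesis by (simp add: span_0)
next
  case False
  have ne: "X - D \<noteq> X + D"
  proof
    assume "X - D = X + D"
    then have "2 *\<^sub>R D = 0" by (simp add: scaleR_2 algebra_simps)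
    then show False using False by simp
  qed
  have "(X - D) + (X + D) = 2 *\<^sub>R X" by (simp add: scaleR_2 algebra_simps)
  then have "midpoint (X - D) (X + D) = X" by (simp add: midpoint_def)
  then have "X \<in> open_segment (X - D) (X + D)" using midpoint_in_open_segment ne by metis
  then have "X + D \<in> F" using face_ofD[OF F _ m p XF] by blast
  then have "-X + (X + D) \<in> (+) (- X) ` F" by blast
  then show ?thesis by (simp add: span_base)
qed

lemma perturb:
  fixes Y :: "real^'p^'n" and M :: "real^'p^'p"
  assumes YM: "opA A (Y ** transpose Y) = b"
    and Msym: "symmetric_mat M"
    and cons: "\<And>i. frob (A i) (Y ** M ** transpose Y) = 0"
  shows "\<exists>e>0. Y ** transpose Y + e *\<^sub>R (Y ** M ** transpose Y) \<in> sdp_feasible A b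
           \<and> Y ** transpose Y - e *\<^sub>R (Y ** M ** transpose Y) \<in> sdp_feasible A b"
proof -
  obtain K where K: "K > 0" "\<And>z. norm (M *v z) \<le> norm z * K"
    using bounded_linear.pos_bounded[OF matrix_vector_mul_bounded_linear[of M]] by blast
  define e where "e = 1 / K"
  have e: "e > 0" using K by (simp add: e_def)
  have qb: "e * \<bar>z \<bullet> (M *v z)\<bar> \<le> z \<bullet> z" for z
  proof -
    have "\<bar>z \<bullet> (M *v z)\<bar> \<le> norm z * norm (M *v z)" by (rule Cauchy_Schwarz_ineq2)
    also have "\<dots> \<le> norm z * (norm z * K)" using K by (simp add: mult_left_mono)
    finally have "e * \<bar>z \<bullet> (M *v z)\<bar> \<le> e * (norm z * (norm z * K))" using e by (simp add: mult_left_mono)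
    also have "\<dots> = z \<bullet> z" using K by (simp add: e_def dot_square_norm power2_eq_square)
    finally show ?thesis .
  qed
  have mem: "Y ** transpose Y + c *\<^sub>R (Y ** M ** transpose Y) \<in> sdp_feasible A b" if c: "\<bar>c\<bar> = e" for c
  proof -
    define N where "N = mat 1 + c *\<^sub>R M"
    have XN: "Y ** transpose Y + c *\<^sub>R (Y ** M ** transpose Y) = Y ** N ** transpose Y"
      by (simp add: N_def mm_add_l mm_add_r mm_scale_l mm_scale_r)
    have Nsym: "symmetric_mat N" using Msym by (simp add: N_def symmetric_mat_iff mat_def)
    have s: "symmetric_mat (Y ** N ** transpose Y)"
      using Nsym by (simp add: symmetric_mat_def matrix_transpose_mul matrix_mul_assoc)
    have o: "opA A (Y ** N ** transpose Y) = b"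
      using YM cons unfolding XN[symmetric] by (simp add: opA_def vec_eq_iff frob_add frob_scale)
    have p: "0 \<le> x \<bullet> ((Y ** N ** transpose Y) *v x)" for x
    proof -
      define z where "z = transpose Y *v x"
      have "x \<bullet> ((Y ** N ** transpose Y) *v x) = z \<bullet> z + c * (z \<bullet> (M *v z))"
        unfolding quad_congr z_def[symmetric]
        by (simp add: N_def matrix_vector_mult_add_rdistrib mv_scale inner_add_right)
      moreover have "\<bar>c * (z \<bullet> (M *v z))\<bar> \<le> z \<bullet> z" using qb[of z] c by (simp add: abs_mult)
      ultimately show ?thesis by linarith
    qed
    show ?thesis unfolding XN using s o p by (simp add: sdp_feasible_def psd_def)
  qed
  show ?thesis using e mem[of e] mem[of "-e"] by (intro exI[of _ e]) (simp add: algebra_simps)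
qed


lemma dim_skew:
  "2 * dim {W::real^'p^'p. transpose W = - W} + CARD('p) \<le> CARD('p) * CARD('p)"
proof -
  obtain f :: "'p \<Rightarrow> nat" and n where f: "f ` UNIV = {i. i < n}" "inj_on f UNIV"
    using finite_imp_inj_to_nat_seg[of "UNIV::'p set"] by auto
  have finj: "f i = f j \<Longrightarrow> i = j" for i j using f(2) by (auto simp: inj_on_def)
  define R where "R = {r::'p\<times>'p. f (fst r) < f (snd r)}"
  define R2 where "R2 = {r::'p\<times>'p. f (snd r) < f (fst r)}"
  define Dg where "Dg = {r::'p\<times>'p. fst r = snd r}"
  have R2: "R2 = prod.swap ` R" by (auto simp: R_def R2_def image_iff)
  have cR2: "card R2 = card R" unfolding R2 by (rule card_image) simp
  have cDg: "card Dg = CARD('p)"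
  proof -
    have "Dg = (\<lambda>i. (i, i)) ` UNIV" by (auto simp: Dg_def)
    then show ?thesis by (simp add: card_image inj_on_def)
  qed
  have U: "(UNIV::('p\<times>'p) set) = R \<union> R2 \<union> Dg"
  proof -
    have "r \<in> R \<union> R2 \<union> Dg" for r :: "'p\<times>'p"
    proof (cases "f (fst r) < f (snd r)")
      case True then show ?thesis by (simp add: R_def)
    next
      case False
      show ?thesis
      proof (cases "f (snd r) < f (fst r)")
        case True then show ?thesis by (simp add: R2_def)
      next
        case False
        with \<open>\<not> f (fst r) < f (snd r)\<close> have "f (fst r) = f (snd r)" by simp
        then have "fst r = snd r" by (rule finj)
        then show ?thesis by (simp add: Dg_def)
      qed
    qed
    then show ?thesis by blast
  qed
  have d1: "R \<inter> R2 = {}" by (auto simp: R_def R2_def)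
  have d2: "(R \<union> R2) \<inter> Dg = {}" by (auto simp: R_def R2_def Dg_def)
  have "CARD('p\<times>'p) = card (R \<union> R2 \<union> Dg)" using U by simp
  also have "\<dots> = card (R \<union> R2) + card Dg" by (rule card_Un_disjoint) (use d2 in auto)
  also have "card (R \<union> R2) = card R + card R2" by (rule card_Un_disjoint) (use d1 in auto)
  finally have "CARD('p\<times>'p) = card R + card R2 + card Dg" .
  then have cardR: "2 * card R + CARD('p) = CARD('p) * CARD('p)"
    using cR2 cDg by simp
  define Es where "Es r = ((\<chi> a b. (if r = (a,b) then 1 else 0) - (if r = (b,a) then 1 else 0)) :: real^'p^'p)" for r
  have sub: "{W::real^'p^'p. transpose W = - W} \<subseteq> span (Es ` R)"
  proof
    fix W :: "real^'p^'p" assume "W \<in> {W. transpose W = - W}"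
    then have tW: "transpose W = - W" by simp
    have sk: "W$b$a = - W$a$b" for a b
    proof -
      have "W$b$a = (transpose W)$a$b" unfolding transpose_def by simp
      also have "\<dots> = (- W)$a$b" by (simp only: tW)
      finally show ?thesis by simp
    qed
    have d0: "W$a$a = 0" for a using sk[of a a] by simp
    define c where "c r = W$(fst r)$(snd r)" for r
    have eq: "W = (\<Sum>r\<in>R. c r *\<^sub>R Es r)"
    proof -
      have "(\<Sum>r\<in>R. c r *\<^sub>R Es r)$a$b = W$a$b" for a b
      proof -
        have "(\<Sum>r\<in>R. c r *\<^sub>R Es r)$a$b = (\<Sum>r\<in>R. (if r = (a,b) then c r else 0) - (if r = (b,a) then c r else 0))"
          by (simp add: Es_def right_diff_distrib if_distrib[of "\<lambda>t. _ * t"] cong: if_cong)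
        also have "\<dots> = (if (a,b) \<in> R then c (a,b) else 0) - (if (b,a) \<in> R then c (b,a) else 0)"
          by (simp add: sum_subtractf)
        also have "\<dots> = W$a$b"
        proof (cases "f a < f b")
          case True then show ?thesis by (simp add: R_def c_def)
        next
          case False
          show ?thesis
          proof (cases "f b < f a")
            case True
            have "W$a$b = - W$b$a" by (rule sk)
            then show ?thesis using True False by (simp add: R_def c_def)
          next
            case False2: False
            then have "a = b" using False finj[of a b] by simp
            then show ?thesis using d0[of a] False by (simp add: R_def c_def)
          qed
        qed
        finally show ?thesis .
      qed
      then show ?thesis by (simp add: vec_eq_iff)
    qed
    show "W \<in> span (Es ` R)" unfolding eq
      by (intro span_sum span_scale span_base) auto
  qed
  have "dim {W::real^'p^'p. transpose W = - W} \<le> card (Es ` R)"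
    by (rule dim_le_card[OF sub]) simp
  also have "\<dots> \<le> card R" by (rule card_image_le) simp
  finally show ?thesis using cardR by linarith
qed


definition outer :: "real^'n \<Rightarrow> 'p \<Rightarrow> real^'p^'n" where
  "outer v j = (\<chi> a c. v$a * (if c = j then 1 else 0))"

lemma if01: "(a::real) * (if P then 1 else 0) = (if P then a else 0)"
  "(if P then a else 0) * (b::real) = (if P then a * b else 0)"
  "(b::real) * (if P then a else 0) = (if P then b * a else 0)"
  by auto

lemma outer_entry: "outer v j $ a $ c = v$a * (if c = j then 1 else 0)"
  by (simp add: outer_def)

lemma transpose_zero': "transpose (0::real^'b^'a) = 0"
  by (simp add: transpose_def vec_eq_iff)

lemma outer_inner: "outer v j \<bullet> outer w j' = (if j = j' then v \<bullet> w else 0)"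
  by (simp add: outer_entry inner_vec_def if01 sum.delta' sum.delta)

lemma outer_mult: "S ** outer v j = outer (S *v v) j"
  by (simp add: vec_eq_iff outer_entry matrix_matrix_mult_def matrix_vector_mult_def
      sum_distrib_right mult_ac)

lemma outer_scale: "outer (c *\<^sub>R v) j = c *\<^sub>R outer v j"
  by (simp add: vec_eq_iff outer_entry)

lemma outer_inner_mat: "outer v j \<bullet> M = (\<Sum>a\<in>UNIV. v$a * M$a$j)"
  by (simp add: outer_entry inner_vec_def if01 sum.delta' sum.delta)

lemma outer_YW:
  fixes Y :: "real^'p^'n" and W :: "real^'q^'p"
  assumes "v v* Y = 0" shows "outer v j \<bullet> (Y ** W) = 0"
proof -
  have "outer v j \<bullet> (Y ** W) = (\<Sum>a\<in>UNIV. \<Sum>b\<in>UNIV. v$a * (Y$a$b * W$b$j))"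
    by (simp add: outer_inner_mat matrix_matrix_mult_def sum_distrib_left)
  also have "\<dots> = (\<Sum>b\<in>UNIV. \<Sum>a\<in>UNIV. v$a * (Y$a$b * W$b$j))" by (rule sum.swap)
  also have "\<dots> = (\<Sum>b\<in>UNIV. (v v* Y)$b * W$b$j)"
    by (simp add: vector_matrix_mult_def sum_distrib_right sum_distrib_left mult_ac)
  also have "\<dots> = 0" using assms by simp
  finally show ?thesis .
qed

lemma quad_orth:
  fixes Os :: "'a::real_inner set"
  assumes fin: "finite Os" and nrm: "\<And>e. e \<in> Os \<Longrightarrow> e \<bullet> e = 1"
    and orth: "\<And>e e'. e \<in> Os \<Longrightarrow> e' \<in> Os \<Longrightarrow> e \<noteq> e' \<Longrightarrow> e \<bullet> e' = 0"
    and lin: "linear f" and eig: "\<And>e. e \<in> Os \<Longrightarrow> f e = \<mu> e *\<^sub>R e"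
  shows "(\<Sum>e\<in>Os. c e *\<^sub>R e) \<bullet> f (\<Sum>e\<in>Os. c e *\<^sub>R e) = (\<Sum>e\<in>Os. (c e)^2 * \<mu> e)"
proof -
  define x where "x = (\<Sum>e\<in>Os. c e *\<^sub>R e)"
  have fx: "f x = (\<Sum>e\<in>Os. (c e * \<mu> e) *\<^sub>R e)"
    unfolding x_def using eig by (simp add: linear_sum[OF lin] linear_scale[OF lin] cong: sum.cong)
  have xo: "x \<bullet> e = c e" if "e \<in> Os" for e
  proof -
    have "x \<bullet> e = (\<Sum>e'\<in>Os. c e' * (e' \<bullet> e))" by (simp add: x_def inner_sum_left)
    also have "\<dots> = (\<Sum>e'\<in>Os. if e' = e then c e' else 0)"
      by (rule sum.cong) (use nrm orth that in auto)
    also have "\<dots> = c e" using fin that by simp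
    finally show ?thesis .
  qed
  have "x \<bullet> f x = (\<Sum>e\<in>Os. (c e * \<mu> e) * (x \<bullet> e))" by (simp add: fx inner_sum_right)
  also have "\<dots> = (\<Sum>e\<in>Os. (c e)^2 * \<mu> e)"
    by (rule sum.cong) (simp_all add: xo power2_eq_square)
  finally show ?thesis by (simp add: x_def)
qed

lemma quad_neg:
  fixes Os :: "'a::real_inner set"
  assumes fin: "finite Os" and nrm: "\<And>e. e \<in> Os \<Longrightarrow> e \<bullet> e = 1"
    and orth: "\<And>e e'. e \<in> Os \<Longrightarrow> e' \<in> Os \<Longrightarrow> e \<noteq> e' \<Longrightarrow> e \<bullet> e' = 0"
    and lin: "linear f" and eig: "\<And>e. e \<in> Os \<Longrightarrow> f e = \<mu> e *\<^sub>R e"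
    and neg: "\<And>e. e \<in> Os \<Longrightarrow> \<mu> e < 0"
    and x: "x \<in> span Os" and nz: "x \<noteq> 0"
  shows "x \<bullet> f x < 0"
proof -
  obtain c where xc: "x = (\<Sum>e\<in>Os. c e *\<^sub>R e)"
    using x span_finite[OF fin] by auto
  have "\<exists>e\<in>Os. c e \<noteq> 0"
  proof (rule ccontr)
    assume "\<not> ?thesis"
    then have "x = 0" unfolding xc by (intro sum.neutral) auto
    then show False using nz by simp
  qed
  then obtain e where e: "e \<in> Os" "c e \<noteq> 0" by blast
  have "x \<bullet> f x = (\<Sum>e\<in>Os. (c e)^2 * \<mu> e)"
    unfolding xc by (rule quad_orth[OF fin nrm orth lin eig])
  also have "\<dots> = (c e)^2 * \<mu> e + (\<Sum>e'\<in>Os - {e}. (c e')^2 * \<mu> e')"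
    using fin e(1) by (simp add: sum.remove)
  also have "\<dots> < 0"
  proof -
    have "(c e)^2 * \<mu> e < 0" using e neg[OF e(1)] by (simp add: mult_pos_neg)
    moreover have "(\<Sum>e'\<in>Os - {e}. (c e')^2 * \<mu> e') \<le> 0"
      by (intro sum_nonpos) (simp add: mult_nonneg_nonpos less_imp_le neg)
    ultimately show ?thesis by linarith
  qed
  finally show ?thesis .
qed

lemma inj_Y:
  fixes Y :: "real^'p^'n"
  assumes "rank Y = CARD('p)" and "Y ** W = 0"
  shows "W = (0::real^'q^'p)"
proof -
  have inj: "inj ((*v) Y)" using assms(1) full_rank_injective by blast
  have "W *v x = 0" for x
  proof -
    have "Y *v (W *v x) = Y *v 0" using assms(2) by (simp add: matrix_vector_mul_assoc)
    then show ?thesis using inj by (metis injD)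
  qed
  then show ?thesis by (metis matrix_eq matrix_vector_mult_0)
qed

lemma inj_YMY:
  fixes Y :: "real^'p^'n"
  assumes "rank Y = CARD('p)" and "Y ** M ** transpose Y = 0"
  shows "M = (0::real^'p^'p)"
proof -
  have "Y ** (M ** transpose Y) = 0" using assms(2) by (simp add: matrix_mul_assoc)
  then have "M ** transpose Y = 0" using inj_Y[OF assms(1)] by blast
  then have "transpose (M ** transpose Y) = 0" by (simp add: transpose_zero')
  then have "Y ** transpose M = 0" by (simp add: matrix_transpose_mul)
  then have "transpose M = 0" using inj_Y[OF assms(1)] by blast
  then show ?thesis by (metis transpose_transpose transpose_zero')
qed


lemma eig_orth:
  fixes S :: "real^'n^'n"
  assumes symS: "symmetric_mat S"
    and eigB: "\<And>b. b \<in> B \<Longrightarrow> \<exists>c. S *v b = c *\<^sub>R b"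
    and dimB: "dim B < DIM(real^'n)"
  obtains v where "norm v = 1" "\<And>b. b \<in> B \<Longrightarrow> b \<bullet> v = 0" "S *v v = (v \<bullet> (S *v v)) *\<^sub>R v"
proof -
  define V where "V = {x. \<forall>b\<in>B. b \<bullet> x = 0}"
  have subV: "subspace V" unfolding V_def subspace_def
    by (auto simp: inner_add_right)
  have invV: "S *v x \<in> V" if "x \<in> V" for x
  proof -
    have "b \<bullet> (S *v x) = 0" if "b \<in> B" for b
    proof -
      obtain c where c: "S *v b = c *\<^sub>R b" using eigB[OF \<open>b \<in> B\<close>] by blast
      have "b \<bullet> (S *v x) = (S *v b) \<bullet> x" by (rule sym_inner_vec[OF symS])
      also have "\<dots> = c * (b \<bullet> x)" by (simp add: c)
      finally show ?thesis using \<open>x \<in> V\<close> \<open>b \<in> B\<close> by (simp add: V_def)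
    qed
    then show ?thesis by (simp add: V_def)
  qed
  obtain x0 where x0: "x0 \<noteq> 0" "\<And>y. y \<in> span B \<Longrightarrow> orthogonal x0 y"
    using orthogonal_to_subspace_exists[OF dimB] by blast
  define K where "K = V \<inter> sphere 0 1"
  have "x0 /\<^sub>R norm x0 \<in> K"
    using x0 span_base[of _ B] by (auto simp: K_def V_def orthogonal_def inner_commute)
  then have Kne: "K \<noteq> {}" by blast
  have "compact (sphere (0::real^'n) 1 \<inter> V)"
    by (intro compact_Int_closed compact_sphere closed_subspace subV)
  then have Kc: "compact K" by (simp add: K_def Int_commute)
  have cont: "continuous_on K (\<lambda>x. x \<bullet> (S *v x))"
    by (intro continuous_intros continuous_on_id linear_continuous_on matrix_vector_mul_bounded_linear)
  obtain v where vK: "v \<in> K" and vmax: "\<And>y. y \<in> K \<Longrightarrow> y \<bullet> (S *v y) \<le> v \<bullet> (S *v v)"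
    using continuous_attains_sup[OF Kc Kne cont] by blast
  define \<mu> where "\<mu> = v \<bullet> (S *v v)"
  have vV: "v \<in> V" and nv: "norm v = 1" using vK by (auto simp: K_def)
  have vv: "v \<bullet> v = 1" using nv by (simp add: dot_square_norm)
  have bound: "y \<bullet> (S *v y) \<le> \<mu> * (y \<bullet> y)" if "y \<in> V" for y
  proof (cases "y = 0")
    case True then show ?thesis by simp
  next
    case False
    define z where "z = y /\<^sub>R norm y"
    have "z \<in> K" using False \<open>y \<in> V\<close> subV by (auto simp: K_def z_def subspace_scale)
    then have "z \<bullet> (S *v z) \<le> \<mu>" using vmax \<mu>_def by blast
    moreover have "z \<bullet> (S *v z) = (y \<bullet> (S *v y)) / (norm y)^2"
      by (simp add: z_def matrix_vector_mult_scaleR power2_eq_square divide_inverse mult_ac)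
    moreover have "y \<bullet> y = (norm y)^2" by (simp add: dot_square_norm)
    moreover have "norm y > 0" using False by simp
    ultimately show ?thesis by (simp add: field_simps)
  qed
  define w where "w = S *v v - \<mu> *\<^sub>R v"
  have wV: "w \<in> V" unfolding w_def
    by (intro subspace_diff[OF subV] subspace_scale[OF subV] invV vV)
  have wv: "v \<bullet> w = 0" by (simp add: w_def inner_diff_right vv \<mu>_def)
  have wSv: "w \<bullet> (S *v v) = w \<bullet> w"
    by (simp add: w_def inner_diff_left inner_diff_right wv vv \<mu>_def inner_commute)
  define a where "a = w \<bullet> w"
  define c where "c = w \<bullet> (S *v w)"
  have vSw: "v \<bullet> (S *v w) = w \<bullet> (S *v v)"
    using sym_inner_vec[OF symS, of v w] by (simp add: inner_commute)
  have key: "2 * t * a \<le> t^2 * (\<mu> * a - c)" for t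
  proof -
    have "v + t *\<^sub>R w \<in> V" by (intro subspace_add[OF subV] subspace_scale[OF subV] vV wV)
    from bound[OF this]
    have "(v + t *\<^sub>R w) \<bullet> (S *v (v + t *\<^sub>R w)) \<le> \<mu> * ((v + t *\<^sub>R w) \<bullet> (v + t *\<^sub>R w))" .
    moreover have "(v + t *\<^sub>R w) \<bullet> (S *v (v + t *\<^sub>R w)) = \<mu> + 2 * t * a + t^2 * c"
      using vSw wSv
      by (simp add: matrix_vector_right_distrib matrix_vector_mult_scaleR inner_add_left inner_add_right
           \<mu>_def a_def c_def power2_eq_square algebra_simps)
    moreover have "(v + t *\<^sub>R w) \<bullet> (v + t *\<^sub>R w) = 1 + t^2 * a"
      using wv vv by (simp add: inner_add_left inner_add_right a_def power2_eq_square inner_commute algebra_simps)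
    ultimately have "\<mu> + 2 * t * a + t^2 * c \<le> \<mu> * (1 + t^2 * a)" by metis
    then show ?thesis by (simp add: algebra_simps)
  qed
  have a0: "a = 0"
  proof (rule ccontr)
    assume "a \<noteq> 0"
    then have apos: "a > 0" by (simp add: a_def)
    define K2 where "K2 = \<mu> * a - c"
    define t where "t = a / (\<bar>K2\<bar> + 1)"
    have tpos: "t > 0" using apos by (simp add: t_def add_pos_nonneg)
    have "2 * t * a \<le> t^2 * K2" using key[of t] by (simp add: K2_def)
    then have "2 * a \<le> t * K2" using tpos by (simp add: power2_eq_square)
    also have "\<dots> \<le> t * \<bar>K2\<bar>" using tpos by (simp add: mult_left_mono)
    also have "\<dots> = a * (\<bar>K2\<bar> / (\<bar>K2\<bar> + 1))" by (simp add: t_def)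
    also have "\<dots> \<le> a * 1" using apos by (intro mult_left_mono) auto
    finally show False using apos by simp
  qed
  then have "w = 0" by (simp add: a_def)
  then have "S *v v = \<mu> *\<^sub>R v" by (simp add: w_def)
  moreover have "b \<bullet> v = 0" if "b \<in> B" for b using vV that by (simp add: V_def)
  ultimately show ?thesis using that nv \<mu>_def by blast
qed


lemma spectral:
  fixes S :: "real^'n^'n"
  assumes symS: "symmetric_mat S"
  obtains u :: "'n \<Rightarrow> real^'n" and l :: "'n \<Rightarrow> real"
  where "\<And>i j. u i \<bullet> u j = (if i = j then 1 else 0)"
    "\<And>i. S *v u i = l i *\<^sub>R u i"
    "\<And>x. x = (\<Sum>i\<in>UNIV. (u i \<bullet> x) *\<^sub>R u i)"
proof -
  define P where "P B \<longleftrightarrow> (\<forall>b\<in>B. norm b = 1) \<and> pairwise orthogonal B \<and>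
      (\<forall>b\<in>B. S *v b = (b \<bullet> (S *v b)) *\<^sub>R b)" for B :: "(real^'n) set"
  have indep: "independent B" if "P B" for B
    using that unfolding P_def
    by (intro pairwise_orthogonal_independent) (auto)
  have bnd: "card B < DIM(real^'n) + 1" if "P B" for B
    using independent_bound[OF indep[OF that]] by simp
  have "P {}" by (simp add: P_def)
  then obtain B where PB: "P B" and Bmax: "\<And>B'. P B' \<Longrightarrow> card B' \<le> card B"
    using ex_has_greatest_nat[of P "{}" card "DIM(real^'n) + 1"] bnd by blast
  have finB: "finite B" using independent_bound[OF indep[OF PB]] by simp
  have spanB: "span B = UNIV"
  proof (rule ccontr)
    assume "span B \<noteq> UNIV"
    then have "dim B \<noteq> DIM(real^'n)" using dim_eq_full by blast
    then have "dim B < DIM(real^'n)" using dim_subset_UNIV[of B] by simp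
    moreover have "\<exists>c. S *v b = c *\<^sub>R b" if "b \<in> B" for b using PB that by (auto simp: P_def)
    ultimately obtain v where v: "norm v = 1" "\<And>b. b \<in> B \<Longrightarrow> b \<bullet> v = 0"
       "S *v v = (v \<bullet> (S *v v)) *\<^sub>R v"
      using eig_orth[OF symS] by metis
    have vB: "v \<notin> B" using v(1) v(2)[of v] by (auto simp: dot_square_norm)
    have "P (insert v B)" using PB v unfolding P_def pairwise_insert
      by (auto simp: orthogonal_def inner_commute)
    then have "card (insert v B) \<le> card B" by (rule Bmax)
    then show False using vB finB by simp
  qed
  have cardB: "card B = CARD('n)"
  proof -
    have "card B = dim B" using dim_eq_card_independent[OF indep[OF PB]] by simp
    also have "\<dots> = DIM(real^'n)" using spanB dim_eq_full by blast
    finally show ?thesis by simp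
  qed
  obtain h where h: "bij_betw h (UNIV::'n set) B"
    using finite_same_card_bij[of "UNIV::'n set" B] finB cardB by auto
  define l where "l i = h i \<bullet> (S *v h i)" for i
  have hB: "h i \<in> B" for i using h by (auto simp: bij_betw_def)
  have hinj: "h i = h j \<Longrightarrow> i = j" for i j using h by (auto simp: bij_betw_def inj_on_def)
  have orth: "h i \<bullet> h j = (if i = j then 1 else 0)" for i j
  proof (cases "i = j")
    case True
    then show ?thesis using PB hB[of i] by (simp add: P_def dot_square_norm)
  next
    case False
    then have "h i \<noteq> h j" using hinj by blast
    then show ?thesis using PB hB[of i] hB[of j] False by (auto simp: P_def pairwise_def orthogonal_def)
  qed
  have eig: "S *v h i = l i *\<^sub>R h i" for i using PB hB[of i] by (simp add: P_def l_def)
  have expand: "x = (\<Sum>i\<in>UNIV. (h i \<bullet> x) *\<^sub>R h i)" for x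
  proof -
    define z where "z = x - (\<Sum>i\<in>UNIV. (h i \<bullet> x) *\<^sub>R h i)"
    have zo: "orthogonal z b" if "b \<in> B" for b
    proof -
      obtain j where bj: "b = h j" using h \<open>b \<in> B\<close> by (auto simp: bij_betw_def)
      have "h j \<bullet> (\<Sum>i\<in>UNIV. (h i \<bullet> x) *\<^sub>R h i) = (\<Sum>i\<in>UNIV. (h i \<bullet> x) * (h j \<bullet> h i))"
        by (simp add: inner_sum_right)
      also have "\<dots> = h j \<bullet> x" by (simp add: orth if_distrib cong: if_cong)
      finally show ?thesis by (simp add: z_def bj orthogonal_def inner_diff_right inner_commute)
    qed
    have "orthogonal z z" by (rule orthogonal_to_span[of z B z]) (use spanB zo in auto)
    then show ?thesis unfolding orthogonal_self by (simp add: z_def)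
  qed
  show ?thesis using that[OF orth eig expand] .
qed


lemma poly_det: "poly (det M) x = det (\<chi> i j. poly (M$i$j) x)"
  unfolding det_def by (simp add: poly_sum poly_prod)

lemma order_lin: "order t [:-a, 1:] = (if t = a then 1 else (0::nat))"
proof (cases "t = a")
  case True then show ?thesis using order_power_n_n[of a 1] by simp
next
  case False then show ?thesis by (subst order_0I) auto
qed

lemma order_prod_lin:
  assumes "finite I"
  shows "order t (\<Prod>i\<in>I. [:-l i, 1:]) = card {i\<in>I. l i = (t::real)}"
  using assms
proof (induction I rule: finite_induct)
  case empty
  then show ?case by (simp add: order_0I)
next
  case (insert j I)
  have nz: "(\<Prod>i\<in>I. [:-l i, 1:]) \<noteq> 0" using insert by (simp add: prod_zero_iff)
  have nz1: "[:-l j, 1:] \<noteq> 0" by simp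
  have nz2: "[:-l j, 1:] * (\<Prod>i\<in>I. [:-l i, 1:]) \<noteq> 0"
    using nz nz1 by (simp only: mult_eq_0_iff) blast
  have "order t (\<Prod>i\<in>insert j I. [:-l i, 1:]) = order t ([:-l j, 1:] * (\<Prod>i\<in>I. [:-l i, 1:]))"
    using insert by simp
  also have "\<dots> = order t [:-l j, 1:] + order t (\<Prod>i\<in>I. [:-l i, 1:])"
    by (rule order_mult[OF nz2])
  also have "\<dots> = card {i\<in>insert j I. l i = t}"
  proof -
    have e: "{i\<in>insert j I. l i = t} = (if l j = t then insert j {i\<in>I. l i = t} else {i\<in>I. l i = t})"
      by auto
    show ?thesis unfolding e using insert by (simp add: order_lin)
  qed
  finally show ?case .
qed

lemma sum_delta_mult: "(\<Sum>j\<in>UNIV. (v::real^'n)$j * (if i = j then x else 0)) = x * v$i"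
proof -
  have "(\<lambda>j. v$j * (if i = j then x else 0)) = (\<lambda>j. if i = j then x * v$i else 0)" by auto
  then show ?thesis by (simp only:) simp
qed

lemma congr_entry:
  fixes u :: "'n \<Rightarrow> real^'n" and M :: "real^'n^'n"
  defines "Q \<equiv> (\<chi> a b. (u b)$a)"
  shows "(transpose Q ** M ** Q)$i$j = u i \<bullet> (M *v u j)"
proof -
  have "(transpose Q ** M ** Q)$i$j = (\<Sum>k\<in>UNIV. \<Sum>a\<in>UNIV. (u i)$a * M$a$k * (u j)$k)"
    by (simp add: Q_def matrix_matrix_mult_def transpose_def sum_distrib_right)
  also have "\<dots> = (\<Sum>a\<in>UNIV. \<Sum>k\<in>UNIV. (u i)$a * M$a$k * (u j)$k)" by (rule sum.swap)
  also have "\<dots> = u i \<bullet> (M *v u j)"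
    by (simp add: inner_vec_def matrix_vector_mult_def sum_distrib_left mult_ac)
  finally show ?thesis .
qed

lemma charpoly_spectral:
  fixes S :: "real^'n^'n" and u :: "'n \<Rightarrow> real^'n"
  assumes orth: "\<And>i j. u i \<bullet> u j = (if i = j then 1 else 0)"
    and eig: "\<And>i. S *v u i = l i *\<^sub>R u i"
  shows "charpoly S = (\<Prod>i\<in>UNIV. [:-l i, 1:])"
proof -
  define Q where "Q = ((\<chi> a b. (u b)$a) :: real^'n^'n)"
  have QQ: "transpose Q ** Q = mat 1"
  proof -
    have "(transpose Q ** Q)$i$j = (mat 1 :: real^'n^'n)$i$j" for i j
    proof -
      have "(transpose Q ** mat 1 ** Q)$i$j = u i \<bullet> (mat 1 *v u j)"
        unfolding Q_def by (rule congr_entry)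
      then have "(transpose Q ** Q)$i$j = u i \<bullet> u j"
        by (simp only: matrix_mul_rid matrix_vector_mul_lid)
      then show ?thesis using orth by (simp add: mat_def)
    qed
    then show ?thesis by (simp add: vec_eq_iff)
  qed
  have detQ: "det (transpose Q) * det Q = 1"
    using QQ det_mul[of "transpose Q" Q] by simp
  have "poly (charpoly S) x = poly (\<Prod>i\<in>UNIV. [:-l i, 1:]) x" for x
  proof -
    define M where "M = ((\<chi> i j. (if i = j then x else 0) - S$i$j) :: real^'n^'n)"
    have "poly (charpoly S) x = det M"
      by (simp add: charpoly_def poly_det M_def if_distrib[of "\<lambda>p. poly p x"] cong: if_cong)
    also have "\<dots> = det (transpose Q ** M ** Q)"
      using detQ by (simp add: det_mul algebra_simps)
    also have "transpose Q ** M ** Q = (\<chi> i j. if i = j then x - l i else 0)"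
    proof -
      have "M *v v = x *\<^sub>R v - S *v v" for v
        by (simp add: M_def vec_eq_iff matrix_vector_mult_def algebra_simps sum_subtractf sum_delta_mult)
      then have "(transpose Q ** M ** Q)$i$j = (if i = j then x - l i else 0)" for i j
        using orth eig by (simp add: congr_entry Q_def inner_diff_right)
      then show ?thesis by (simp add: vec_eq_iff)
    qed
    also have "det (\<chi> i j. if i = j then x - l i else 0) = (\<Prod>i\<in>UNIV. x - l i)"
      by (subst det_diagonal) auto
    also have "\<dots> = poly (\<Prod>i\<in>UNIV. [:-l i, 1:]) x" by (simp add: poly_prod)
    finally show ?thesis .
  qed
  then show ?thesis using poly_eq_poly_eq_iff by blast
qed

lemma num_neg_spectral:
  fixes S :: "real^'n^'n" and u :: "'n \<Rightarrow> real^'n"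
  assumes orth: "\<And>i j. u i \<bullet> u j = (if i = j then 1 else 0)"
    and eig: "\<And>i. S *v u i = l i *\<^sub>R u i"
  shows "num_neg_eig S = card {i. l i < 0}"
proof -
  have cp: "charpoly S = (\<Prod>i\<in>UNIV. [:-l i, 1:])" by (rule charpoly_spectral[OF orth eig])
  have roots: "{t. t < 0 \<and> poly (charpoly S) t = 0} = l ` {i. l i < 0}"
    by (auto simp: cp poly_prod prod_zero_iff)
  have "num_neg_eig S = (\<Sum>t\<in>l ` {i. l i < 0}. card {i. l i = t})"
    unfolding num_neg_eig_def roots by (simp add: cp order_prod_lin)
  also have "\<dots> = (\<Sum>t\<in>l ` {i. l i < 0}. card {i\<in>{i. l i < 0}. l i = t})"
    by (intro sum.cong refl arg_cong[where f=card]) auto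
  also have "\<dots> = card {i. l i < 0}"
    using sum.image_gen[of "{i. l i < 0}" "\<lambda>_. (1::nat)" l] by simp
  finally show ?thesis .
qed


lemma vm_scale: "(c *\<^sub>R v) v* (M::real^'b^'a) = c *\<^sub>R (v v* M)"
  by (simp add: vector_matrix_mult_def vec_eq_iff sum_distrib_left mult_ac)

lemma lin_left: "linear (\<lambda>W::real^'c^'b. (Y::real^'b^'a) ** W)"
  by (rule linearI) (simp_all add: mm_add_l mm_scale_r)

lemma main_count:
  fixes A :: "'m::finite \<Rightarrow> real^'n^'n" and Y :: "real^'p^'n" and S :: "real^'n^'n"
    and u :: "'n \<Rightarrow> real^'n" and l :: "'n \<Rightarrow> real"
  assumes symA: "\<forall>i. symmetric_mat (A i)"
    and Y_in: "Y \<in> Mp A b"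
    and rankY: "rank Y = CARD('p)"
    and symS: "symmetric_mat S"
    and SY: "S ** Y = 0"
    and crit2: "\<forall>Yd\<in>tangent_space A Y. 0 \<le> frob Yd (S ** Yd)"
    and orth: "\<And>i j. u i \<bullet> u j = (if i = j then 1 else 0)"
    and eig: "\<And>i. S *v u i = l i *\<^sub>R u i"
  shows "real (2 * card {i. l i < 0} * CARD('p) + CARD('p) * CARD('p) + CARD('p))
         \<le> 2 * real (dim (span_AY A Y)) + 2 * real_of_int (aff_dim (face_of_point (sdp_feasible A b) (Y ** transpose Y)))"
proof -
  define p where "p = CARD('p)"
  define n where "n = CARD('n)"
  define X where "X = Y ** transpose Y"
  define C where "C = sdp_feasible A b"
  define F where "F = face_of_point C X"
  define T where "T = tangent_space A Y"
  define m' where "m' = dim (span_AY A Y)"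
  have XC: "X \<in> C"
    using Y_in psd_gram[of Y] by (simp add: X_def C_def sdp_feasible_def Mp_def psd_def)
  have FX: "F face_of C" "X \<in> rel_interior F"
    using face_of_point_props[OF _ XC] convex_sdp[of A b] by (simp_all add: F_def C_def)
  have XF: "X \<in> F" using FX(2) rel_interior_subset by blast
  define dF where "dF = dim ((+) (- X) ` F)"
  have affF: "aff_dim F = int dF"
    unfolding dF_def by (rule aff_dim_eq_dim) (simp add: XF hull_inc)
  have dir: "Y ** M ** transpose Y \<in> span ((+) (- X) ` F)"
    if Msym: "symmetric_mat M" and cons: "\<And>i. frob (A i) (Y ** M ** transpose Y) = 0" for M
  proof -
    have YM: "opA A (Y ** transpose Y) = b" using Y_in by (simp add: Mp_def)
    obtain e where e: "e > 0" "X + e *\<^sub>R (Y ** M ** transpose Y) \<in> C"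
        "X - e *\<^sub>R (Y ** M ** transpose Y) \<in> C"
      using perturb[OF YM Msym cons] by (auto simp: X_def C_def)
    have "e *\<^sub>R (Y ** M ** transpose Y) \<in> span ((+) (- X) ` F)"
      by (rule face_dir[OF FX(1) XF e(2) e(3)])
    then have "(1/e) *\<^sub>R (e *\<^sub>R (Y ** M ** transpose Y)) \<in> span ((+) (- X) ` F)"
      by (rule span_mul)
    then show ?thesis using e(1) by simp
  qed
  define N where "N = {i. l i < 0}"
  define Os where "Os = (\<lambda>(i,j). outer (u i) j) ` (N \<times> (UNIV::'p set))"
  have finOs: "finite Os" by (simp add: Os_def)
  have oo: "outer (u i) j \<bullet> outer (u i') j' = (if (i,j) = (i',j') then 1 else 0)" for i j i' j'
    by (simp add: outer_inner orth)
  have injO: "inj_on (\<lambda>(i,j). outer (u i) j) (N \<times> (UNIV::'p set))"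
  proof (rule inj_onI, clarify)
    fix i j i' j' assume eq: "outer (u i) j = outer (u i') (j'::'p)"
    have "outer (u i) j \<bullet> outer (u i') j' = outer (u i) j \<bullet> outer (u i) j" using eq by simp
    then have "outer (u i) j \<bullet> outer (u i') j' = 1" using oo[of i j i j] by simp
    then show "i = i' \<and> j = j'" using oo[of i j i' j'] by (auto split: if_splits)
  qed
  have cardOs: "card Os = card N * p"
    unfolding Os_def p_def by (simp add: card_image[OF injO] card_cartesian_product)
  have Os_nrm: "e \<bullet> e = 1" if eO: "e \<in> Os" for e
  proof -
    obtain i j where e: "e = outer (u i) j" using eO by (auto simp: Os_def)
    show ?thesis using oo[of i j i j] by (simp add: e)
  qed
  have Os_orth: "e \<bullet> e' = 0" if eO: "e \<in> Os" "e' \<in> Os" "e \<noteq> e'" for e e'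
  proof -
    obtain i j where e: "e = outer (u i) j" using eO by (auto simp: Os_def)
    obtain i' j' where e': "e' = outer (u i') j'" using eO by (auto simp: Os_def)
    have "(i,j) \<noteq> (i',j')" using eO e e' by auto
    then show ?thesis using oo[of i j i' j'] e e' by simp
  qed
  have Os_eig: "S ** e = (e \<bullet> (S ** e)) *\<^sub>R e" if eO: "e \<in> Os" for e
  proof -
    obtain i j where e: "e = outer (u i) j" using eO by (auto simp: Os_def)
    have "S ** e = l i *\<^sub>R e" by (simp add: e outer_mult eig outer_scale)
    moreover then have "e \<bullet> (S ** e) = l i" using oo[of i j i j] by (simp add: e)
    ultimately show ?thesis by simp
  qed
  have Os_neg: "e \<bullet> (S ** e) < 0" if eO: "e \<in> Os" for e
  proof -
    obtain i j where e: "e = outer (u i) j" "i \<in> N" using eO by (auto simp: Os_def)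
    have "S ** e = l i *\<^sub>R e" by (simp add: e outer_mult eig outer_scale)
    then have "e \<bullet> (S ** e) = l i" using oo[of i j i j] by (simp add: e)
    then show ?thesis using e(2) by (simp add: N_def)
  qed
  have uY: "u i v* Y = 0" if "i \<in> N" for i
  proof -
    have "(S *v u i) v* Y = u i v* (transpose S ** Y)"
      by (metis vector_transpose_matrix vector_matrix_mul_assoc)
    also have "\<dots> = 0" using symS SY by (simp add: symmetric_mat_def)
    finally have "l i *\<^sub>R (u i v* Y) = 0" by (simp add: eig vm_scale)
    then show ?thesis using that by (simp add: N_def)
  qed
  have Os_E2: "e \<bullet> (Y ** W) = 0" if eO: "e \<in> Os" for e and W :: "real^'p^'p"
  proof -
    obtain i j where e: "e = outer (u i) j" "i \<in> N" using eO by (auto simp: Os_def)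
    show ?thesis unfolding e(1) by (rule outer_YW[OF uY[OF e(2)]])
  qed
  define E1 where "E1 = span Os"
  define E2 where "E2 = range (\<lambda>W::real^'p^'p. Y ** W)"
  define E where "E = {x + y |x y. x \<in> E1 \<and> y \<in> E2}"
  have sE1: "subspace E1" by (simp add: E1_def)
  have sE2: "subspace E2" unfolding E2_def
    by (rule linear_subspace_image[OF lin_left subspace_UNIV])
  have sE: "subspace E" unfolding E_def by (rule subspace_sums[OF sE1 sE2])
  have dimE1: "dim E1 = card N * p"
  proof -
    have z: "0 \<notin> Os" using Os_nrm[of 0] by auto
    have "independent Os"
      by (rule pairwise_orthogonal_independent[OF _ z])
        (use Os_orth in \<open>auto simp: pairwise_def orthogonal_def\<close>)
    then show ?thesis by (simp add: E1_def dim_eq_card_independent cardOs)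
  qed
  have injY: "inj_on (\<lambda>W::real^'p^'p. Y ** W) (span UNIV)"
  proof (rule inj_onI)
    fix W1 W2 :: "real^'p^'p" assume "Y ** W1 = Y ** W2"
    then have "Y ** (W1 - W2) = 0" by (simp add: mm_diff_l)
    then have "W1 - W2 = 0" by (rule inj_Y[OF rankY])
    then show "W1 = W2" by simp
  qed
  have dimE2: "dim E2 = p * p"
  proof -
    have "dim E2 = dim (UNIV :: (real^'p^'p) set)"
      unfolding E2_def by (rule dim_image_eq[OF lin_left injY])
    also have "\<dots> = p * p" by (simp add: p_def)
    finally show ?thesis .
  qed
  have E12: "E1 \<inter> E2 \<subseteq> {0}"
  proof
    fix x assume x: "x \<in> E1 \<inter> E2"
    then obtain W where xW: "x = Y ** W" by (auto simp: E2_def)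
    have "orthogonal x x"
      by (rule orthogonal_to_span[of x Os x])
        (use x xW Os_E2 in \<open>auto simp: E1_def orthogonal_def inner_commute\<close>)
    then show "x \<in> {0}" by (simp add: orthogonal_self)
  qed
  have dimE: "dim E = card N * p + p * p"
  proof -
    have "dim (E1 \<inter> E2) \<le> dim {0::real^'p^'n}" by (rule dim_subset[OF E12])
    then have z: "dim (E1 \<inter> E2) = 0" by simp
    have "dim E + dim (E1 \<inter> E2) = dim E1 + dim E2"
      unfolding E_def by (rule dim_sums_Int[OF sE1 sE2])
    then show ?thesis using z dimE1 dimE2 by linarith
  qed
  have Tdef: "T = {Yd. \<forall>i. (A i ** Y) \<bullet> Yd = 0}"
    by (simp add: T_def tangent_space_def frob_inner)
  have sT: "subspace T" unfolding Tdef subspace_def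
    by (auto simp: inner_add_right)
  have Teq: "{y \<in> UNIV. \<forall>x\<in>span_AY A Y. orthogonal x y} = T"
  proof (intro set_eqI iffI)
    fix y assume "y \<in> {y \<in> UNIV. \<forall>x\<in>span_AY A Y. orthogonal x y}"
    then have "orthogonal (A i ** Y) y" for i
      by (simp add: span_AY_def span_base)
    then show "y \<in> T" by (simp add: Tdef orthogonal_def)
  next
    fix y assume "y \<in> T"
    then have "orthogonal y x" if "x \<in> range (\<lambda>i. A i ** Y)" for x
      using that by (auto simp: Tdef orthogonal_def inner_commute)
    then have "orthogonal y x" if "x \<in> span_AY A Y" for x
      using that orthogonal_to_span unfolding span_AY_def by blast
    then show "y \<in> {y \<in> UNIV. \<forall>x\<in>span_AY A Y. orthogonal x y}"
      by (simp add: orthogonal_commute)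
  qed
  have dimT: "dim T + m' = n * p"
  proof -
    have "dim {y \<in> UNIV. \<forall>x\<in>span_AY A Y. orthogonal x y} + dim (span_AY A Y) = dim (UNIV :: (real^'p^'n) set)"
      by (rule dim_subspace_orthogonal_to_vectors) (simp_all add: span_AY_def)
    then have "dim T + dim (span_AY A Y) = dim (UNIV :: (real^'p^'n) set)" by (simp only: Teq)
    then show ?thesis by (simp add: m'_def n_def p_def)
  qed
  define H where "H = T \<inter> E2"
  have TE: "T \<inter> E \<subseteq> H"
  proof
    fix x assume x: "x \<in> T \<inter> E"
    then obtain e1 e2 where ex: "x = e1 + e2" "e1 \<in> E1" "e2 \<in> E2" by (auto simp: E_def)
    obtain W where e2W: "e2 = Y ** W" using ex(3) by (auto simp: E2_def)
    have Se2: "S ** e2 = 0" by (simp add: e2W matrix_mul_assoc SY)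
    have "0 \<le> frob x (S ** x)" using crit2 x by (simp add: T_def)
    also have "frob x (S ** x) = e1 \<bullet> (S ** e1)"
    proof -
      have "e2 \<bullet> (S ** e1) = (S ** e2) \<bullet> e1" by (rule sym_inner_mat[OF symS])
      then show ?thesis by (simp add: frob_inner ex(1) mm_add_l Se2 inner_add_left)
    qed
    finally have q: "0 \<le> e1 \<bullet> (S ** e1)" .
    have "e1 = 0"
    proof (rule ccontr)
      assume nz: "e1 \<noteq> 0"
      have "e1 \<bullet> (S ** e1) < 0"
        by (rule quad_neg[OF finOs Os_nrm Os_orth lin_left Os_eig Os_neg])
          (use ex(2) nz in \<open>simp_all add: E1_def\<close>)
      then show False using q by simp
    qed
    then show "x \<in> H" using x ex by (simp add: H_def)
  qed
  define psi where "psi Z = Y ** transpose Z + Z ** transpose Y" for Z :: "real^'p^'n"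
  have lpsi: "linear psi"
    by (rule linearI)
      (simp_all add: psi_def transpose_add' transpose_scale' mm_add_l mm_add_r mm_scale_l mm_scale_r
        algebra_simps)
  have psiW: "psi (Y ** W) = Y ** (transpose W + W) ** transpose Y" for W :: "real^'p^'p"
    by (simp add: psi_def matrix_transpose_mul matrix_mul_assoc mm_add_l mm_add_r)
  define Kset where "Kset = H \<inter> {Z. psi Z = 0}"
  have sH: "subspace H" unfolding H_def by (rule subspace_inter[OF sT sE2])
  have sK: "subspace Kset" unfolding Kset_def
    by (rule subspace_inter[OF sH linear_subspace_kernel[OF lpsi]])
  have KH: "Kset \<subseteq> H" by (auto simp: Kset_def)
  define Sk where "Sk = {W::real^'p^'p. transpose W = - W}"
  have KSk: "Kset \<subseteq> (\<lambda>W. Y ** W) ` Sk"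
  proof
    fix Z assume Z: "Z \<in> Kset"
    then obtain W where ZW: "Z = Y ** W" by (auto simp: Kset_def H_def E2_def)
    have "Y ** (transpose W + W) ** transpose Y = 0" using Z psiW[of W] by (simp add: Kset_def ZW)
    then have "transpose W + W = 0" by (rule inj_YMY[OF rankY])
    then have "W \<in> Sk" by (simp add: Sk_def eq_neg_iff_add_eq_0)
    then show "Z \<in> (\<lambda>W. Y ** W) ` Sk" using ZW by blast
  qed
  have dimK: "dim Kset \<le> dim Sk"
  proof -
    have "dim Kset \<le> dim ((\<lambda>W. Y ** W) ` Sk)" by (rule dim_subset[OF KSk])
    also have "\<dots> \<le> dim Sk" by (rule dim_image_le[OF lin_left])
    finally show ?thesis .
  qed
  have dimSk: "2 * dim Sk + p \<le> p * p" unfolding Sk_def p_def by (rule dim_skew)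
  have psiH: "psi ` H \<subseteq> span ((+) (- X) ` F)"
  proof
    fix D assume "D \<in> psi ` H"
    then obtain Z where Z: "Z \<in> H" "D = psi Z" by blast
    then obtain W where ZW: "Z = Y ** W" by (auto simp: H_def E2_def)
    have ZT: "Z \<in> T" using Z by (simp add: H_def)
    define M where "M = transpose W + W"
    have Msym: "symmetric_mat M" by (simp add: M_def symmetric_mat_def transpose_add' add.commute)
    have cons: "frob (A i) (Y ** M ** transpose Y) = 0" for i
    proof -
      have c1: "frob (A i) (Y ** W ** transpose Y) = 0"
        using frob_trace[of "A i" "Y ** W" Y] ZT by (simp add: T_def tangent_space_def ZW)
      have "Y ** transpose W ** transpose Y = transpose (Y ** W ** transpose Y)"
        by (simp add: matrix_transpose_mul matrix_mul_assoc)
      then have c2: "frob (A i) (Y ** transpose W ** transpose Y) = 0"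
        using c1 symA by (simp add: frob_transpose symmetric_mat_def)
      show ?thesis using c1 c2 by (simp add: M_def mm_add_l mm_add_r frob_add)
    qed
    have "D = Y ** M ** transpose Y" using Z ZW psiW by (simp add: M_def)
    then show "D \<in> span ((+) (- X) ` F)" using dir[OF Msym cons] by simp
  qed
  define H' where "H' = {y \<in> H. \<forall>x\<in>Kset. orthogonal x y}"
  have dimH: "dim H' + dim Kset = dim H"
    unfolding H'_def by (rule dim_subspace_orthogonal_to_vectors[OF sK sH KH])
  have sH': "subspace H'"
  proof -
    have "subspace {y. \<forall>x\<in>Kset. orthogonal x y}"
      unfolding subspace_def by (auto simp: orthogonal_clauses)
    then have "subspace (H \<inter> {y. \<forall>x\<in>Kset. orthogonal x y})" by (rule subspace_inter[OF sH])
    moreover have "H \<inter> {y. \<forall>x\<in>Kset. orthogonal x y} = H'" by (auto simp: H'_def)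
    ultimately show ?thesis by simp
  qed
  have injpsi: "inj_on psi (span H')"
  proof (rule inj_onI)
    fix z1 z2 assume z: "z1 \<in> span H'" "z2 \<in> span H'" and eq: "psi z1 = psi z2"
    have "span H' = H'" using sH' by simp
    then have zz: "z1 - z2 \<in> H'" using z sH' by (metis subspace_diff)
    have "psi (z1 - z2) = 0" using eq by (simp add: linear_diff[OF lpsi])
    then have "z1 - z2 \<in> Kset" using zz by (simp add: Kset_def H'_def)
    then have "orthogonal (z1 - z2) (z1 - z2)" using zz by (simp add: H'_def)
    then show "z1 = z2" by (simp add: orthogonal_self)
  qed
  have dimH': "dim H' \<le> dF"
  proof -
    have "dim H' = dim (psi ` H')" by (rule dim_image_eq[OF lpsi injpsi, symmetric])
    also have "\<dots> \<le> dim (span ((+) (- X) ` F))"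
      by (rule dim_subset) (use psiH H'_def in auto)
    also have "\<dots> = dF" by (simp add: dF_def dim_span)
    finally show ?thesis .
  qed
  have dimTE: "dim (T \<inter> E) \<le> dim H" by (rule dim_subset[OF TE])
  have sumTE: "dim {x + y |x y. x \<in> T \<and> y \<in> E} + dim (T \<inter> E) = dim T + dim E"
    by (rule dim_sums_Int[OF sT sE])
  have "dim {x + y |x y. x \<in> T \<and> y \<in> E} \<le> dim (UNIV :: (real^'p^'n) set)"
    by (rule dim_subset) simp
  then have ubd: "dim {x + y |x y. x \<in> T \<and> y \<in> E} \<le> n * p" by (simp add: n_def p_def)
  have final: "2 * card N * p + p * p + p \<le> 2 * m' + 2 * dF"
    using dimT dimE sumTE ubd dimTE dimH dimH' dimK dimSk by linarith
  have "real (2 * card N * p + p * p + p) \<le> real (2 * m' + 2 * dF)"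
    using final by (simp only: of_nat_le_iff)
  then show ?thesis using affF
    by (simp add: N_def p_def m'_def F_def C_def X_def)
qed


lemma opA_adj_entry: "(opA_adj A v)$i$j = (\<Sum>k\<in>UNIV. v$k * A k $i$j)"
  by (simp add: opA_adj_def sum_component)

lemma sym_Smat:
  assumes "symmetric_mat C" "\<forall>i. symmetric_mat (A i)"
  shows "symmetric_mat (Smat A C Y)"
proof -
  have "(Smat A C Y)$i$j = (Smat A C Y)$j$i" for i j
  proof -
    have "(Smat A C Y)$i$j = C$i$j - (\<Sum>k\<in>UNIV. mult_mu A C Y$k * A k $i$j)"
      by (simp add: Smat_def opA_adj_entry)
    also have "\<dots> = C$j$i - (\<Sum>k\<in>UNIV. mult_mu A C Y$k * A k $j$i)"
    proof -
      have "C$i$j = C$j$i" using assms(1) by (rule sym_entry)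
      moreover have "A k $i$j = A k $j$i" for k using assms(2) sym_entry by blast
      ultimately show ?thesis by simp
    qed
    also have "\<dots> = (Smat A C Y)$j$i"
      by (simp add: Smat_def opA_adj_entry)
    finally show ?thesis .
  qed
  then show ?thesis by (simp add: symmetric_mat_iff)
qed

lemma frob_adj: "frob (opA_adj A v) Z = v \<bullet> opA A Z"
proof -
  have "frob (opA_adj A v) Z = (\<Sum>i\<in>UNIV. \<Sum>j\<in>UNIV. \<Sum>k\<in>UNIV. v$k * (A k $i$j * Z$i$j))"
    by (simp add: frob_def opA_adj_entry sum_distrib_right sum_distrib_left mult_ac)
  also have "\<dots> = (\<Sum>i\<in>UNIV. \<Sum>k\<in>UNIV. \<Sum>j\<in>UNIV. v$k * (A k $i$j * Z$i$j))"
    by (rule sum.cong[OF refl], rule sum.swap)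
  also have "\<dots> = (\<Sum>k\<in>UNIV. \<Sum>i\<in>UNIV. \<Sum>j\<in>UNIV. v$k * (A k $i$j * Z$i$j))"
    by (rule sum.swap)
  also have "\<dots> = v \<bullet> opA A Z"
    by (simp add: opA_def inner_vec_def frob_def sum_distrib_left)
  finally show ?thesis .
qed


lemma spectral_entry:
  fixes S :: "real^'n^'n"
  assumes eig: "\<And>i. S *v u i = l i *\<^sub>R u i"
    and exp: "\<And>x. x = (\<Sum>i\<in>UNIV. (u i \<bullet> x) *\<^sub>R u i)"
  shows "S$a$b = (\<Sum>i\<in>UNIV. l i * (u i $ a * u i $ b))"
proof -
  have "S$a$b = (S *v axis b 1)$a"
    by (simp add: matrix_vector_mult_def axis_def if01 sum.delta sum.delta')
  also have "axis b 1 = (\<Sum>i\<in>UNIV. (u i $ b) *\<^sub>R u i)"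
    using exp[of "axis b 1"] by (simp add: inner_axis)
  also have "S *v (\<Sum>i\<in>UNIV. (u i $ b) *\<^sub>R u i) = (\<Sum>i\<in>UNIV. (u i $ b * l i) *\<^sub>R u i)"
    by (simp add: linear_sum[OF matrix_vector_mul_linear]
        linear_scale[OF matrix_vector_mul_linear] eig)
  also have "(\<Sum>i\<in>UNIV. (u i $ b * l i) *\<^sub>R u i)$a = (\<Sum>i\<in>UNIV. l i * (u i $ a * u i $ b))"
    by (simp add: sum_component mult_ac)
  finally show ?thesis .
qed

lemma frob_psd:
  fixes S Z :: "real^'n^'n"
  assumes eig: "\<And>i. S *v u i = l i *\<^sub>R u i"
    and exp: "\<And>x. x = (\<Sum>i\<in>UNIV. (u i \<bullet> x) *\<^sub>R u i)"
    and lpos: "\<And>i. 0 \<le> l i" and Zp: "psd Z"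
  shows "0 \<le> frob S Z"
proof -
  have "frob S Z = (\<Sum>a\<in>UNIV. \<Sum>b\<in>UNIV. \<Sum>i\<in>UNIV. l i * (u i $ a * (Z$a$b * u i $ b)))"
    by (simp add: frob_def spectral_entry[OF eig exp] sum_distrib_right sum_distrib_left mult_ac)
  also have "\<dots> = (\<Sum>a\<in>UNIV. \<Sum>i\<in>UNIV. \<Sum>b\<in>UNIV. l i * (u i $ a * (Z$a$b * u i $ b)))"
    by (rule sum.cong[OF refl], rule sum.swap)
  also have "\<dots> = (\<Sum>i\<in>UNIV. \<Sum>a\<in>UNIV. \<Sum>b\<in>UNIV. l i * (u i $ a * (Z$a$b * u i $ b)))"
    by (rule sum.swap)
  also have "\<dots> = (\<Sum>i\<in>UNIV. l i * (u i \<bullet> (Z *v u i)))"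
    by (simp add: inner_vec_def matrix_vector_mult_def sum_distrib_left)
  also have "\<dots> \<ge> 0"
    using lpos Zp by (intro sum_nonneg mult_nonneg_nonneg) (auto simp: psd_def)
  finally show ?thesis .
qed


theorem theorem4:
  fixes A :: "'m::finite \<Rightarrow> real^'n::finite^'n"
    and b :: "real^'m"
    and C :: "real^'n^'n"
    and Y :: "real^'p::finite^'n"
  assumes symA: "\<forall>i. symmetric_mat (A i)"
    and symC: "symmetric_mat C"
    and nonempty: "sdp_feasible A b \<noteq> {}"
    and assm1: "assumption1 A b TYPE('p)"
    and Y_in: "Y \<in> Mp A b"
    and crit: "second_order_critical A C Y"
    and rankY: "rank Y = CARD('p)"
  shows "let X = Y ** transpose Y;
             p = real CARD('p);
             m' = real (dim (span_AY A Y));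
             \<Delta> = p * (p + 1) / 2 - m';
             dF = real_of_int (aff_dim (face_of_point (sdp_feasible A b) X));
             S = Smat A C Y
         in int (num_neg_eig S) \<le> \<lfloor>(dF - \<Delta>) / p\<rfloor>
            \<and> (dF < \<Delta> + p \<longrightarrow>
                 psd S
               \<and> (\<forall>X'\<in>sdp_feasible A b. frob C X \<le> frob C X')
               \<and> (\<forall>Y'::real^'p^'n\<in>Mp A b. frob (C ** Y) Y \<le> frob (C ** Y') Y'))"
proof -
  define X where "X = Y ** transpose Y"
  define p where "p = real CARD('p)"
  define m' where "m' = real (dim (span_AY A Y))"
  define \<Delta> where "\<Delta> = p * (p + 1) / 2 - m'"
  define dF where "dF = real_of_int (aff_dim (face_of_point (sdp_feasible A b) X))"
  define S where "S = Smat A C Y"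
  have symS: "symmetric_mat S" unfolding S_def by (rule sym_Smat[OF symC symA])
  have SY: "S ** Y = 0" using crit by (simp add: second_order_critical_def S_def)
  have crit2: "\<forall>Yd\<in>tangent_space A Y. 0 \<le> frob Yd (S ** Yd)"
    using crit by (simp add: second_order_critical_def S_def)
  obtain u :: "'n \<Rightarrow> real^'n" and l :: "'n \<Rightarrow> real" where orth: "\<And>i j. u i \<bullet> u j = (if i = j then 1 else 0)"
    and eig: "\<And>i. S *v u i = l i *\<^sub>R u i"
    and exp: "\<And>x. x = (\<Sum>i\<in>UNIV. (u i \<bullet> x) *\<^sub>R u i)"
    using spectral[OF symS] by blast
  define k where "k = card {i. l i < 0}"
  have nn: "num_neg_eig S = k" unfolding k_def by (rule num_neg_spectral[OF orth eig])
  have cnt: "real (2 * k * CARD('p) + CARD('p) * CARD('p) + CARD('p)) \<le> 2 * m' + 2 * dF"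
    using main_count[OF symA Y_in rankY symS SY crit2 orth eig]
    by (simp add: k_def m'_def dF_def X_def)
  have ppos: "p > 0" by (simp add: p_def)
  have kp: "real k * p \<le> dF - \<Delta>"
  proof -
    have "2 * real k * p + p * p + p \<le> 2 * m' + 2 * dF" using cnt by (simp add: p_def)
    then show ?thesis by (simp add: \<Delta>_def algebra_simps field_simps)
  qed
  have part1: "int k \<le> \<lfloor>(dF - \<Delta>) / p\<rfloor>"
  proof -
    have "real k \<le> (dF - \<Delta>) / p" using kp ppos by (simp add: pos_le_divide_eq)
    then show ?thesis by (simp add: le_floor_iff)
  qed
  have part2: "psd S \<and> (\<forall>X'\<in>sdp_feasible A b. frob C X \<le> frob C X')
               \<and> (\<forall>Y'::real^'p^'n\<in>Mp A b. frob (C ** Y) Y \<le> frob (C ** Y') Y')"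
    if small: "dF < \<Delta> + p"
  proof -
    have "real k * p < 1 * p" using kp small by simp
    then have "real k < 1" using ppos by (simp only: mult_less_cancel_right)
    then have "k = 0" by simp
    then have em: "{i. l i < 0} = {}" unfolding k_def by simp
    have lpos: "0 \<le> l i" for i
    proof (rule ccontr)
      assume "\<not> 0 \<le> l i"
      then have "i \<in> {i. l i < 0}" by simp
      then show False using em by blast
    qed
    have psdS: "psd S"
    proof -
      have "0 \<le> x \<bullet> (S *v x)" for x
      proof -
        have "S *v x = (\<Sum>i\<in>UNIV. ((u i \<bullet> x) * l i) *\<^sub>R u i)"
          by (subst exp[of x])
            (simp add: linear_sum[OF matrix_vector_mul_linear] linear_scale[OF matrix_vector_mul_linear] eig)
        then have "x \<bullet> (S *v x) = (\<Sum>i\<in>UNIV. l i * (u i \<bullet> x)^2)"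
          by (simp add: inner_sum_right power2_eq_square inner_commute mult_ac)
        also have "\<dots> \<ge> 0" using lpos by (intro sum_nonneg) simp
        finally show ?thesis .
      qed
      then show ?thesis using symS by (simp add: psd_def)
    qed
    have feasC: "frob C Z = frob S Z + mult_mu A C Y \<bullet> b" if "Z \<in> sdp_feasible A b" for Z
    proof -
      have "C = S + opA_adj A (mult_mu A C Y)" by (simp add: S_def Smat_def)
      then have "frob C Z = frob (S + opA_adj A (mult_mu A C Y)) Z" by simp
      also have "\<dots> = frob S Z + frob (opA_adj A (mult_mu A C Y)) Z"
        by (simp add: frob_inner inner_add_left)
      finally have "frob C Z = frob S Z + frob (opA_adj A (mult_mu A C Y)) Z" .
      then show ?thesis using that by (simp add: frob_adj sdp_feasible_def)
    qed
    have XC: "X \<in> sdp_feasible A b"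
      using Y_in psd_gram[of Y] by (simp add: X_def sdp_feasible_def Mp_def psd_def)
    have SX: "frob S X = 0"
      using frob_trace[of S Y Y] SY by (simp add: X_def frob_def)
    have sdpopt: "\<forall>X'\<in>sdp_feasible A b. frob C X \<le> frob C X'"
    proof
      fix X' assume X': "X' \<in> sdp_feasible A b"
      have "0 \<le> frob S X'"
        by (rule frob_psd[OF eig exp lpos]) (use X' in \<open>simp add: sdp_feasible_def\<close>)
      then show "frob C X \<le> frob C X'" using feasC[OF X'] feasC[OF XC] SX by simp
    qed
    have popt: "\<forall>Y'::real^'p^'n\<in>Mp A b. frob (C ** Y) Y \<le> frob (C ** Y') Y'"
    proof
      fix Y' :: "real^'p^'n" assume Y': "Y' \<in> Mp A b"
      have X'C: "Y' ** transpose Y' \<in> sdp_feasible A b"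
        using Y' psd_gram[of Y'] by (simp add: sdp_feasible_def Mp_def psd_def)
      have "frob (C ** Y) Y = frob C X" using frob_trace[of C Y Y] by (simp add: X_def)
      also have "\<dots> \<le> frob C (Y' ** transpose Y')" using sdpopt X'C by blast
      also have "\<dots> = frob (C ** Y') Y'" by (rule frob_trace)
      finally show "frob (C ** Y) Y \<le> frob (C ** Y') Y'" .
    qed
    show ?thesis using psdS sdpopt popt by blast
  qed
  show ?thesis
    unfolding Let_def X_def[symmetric] p_def[symmetric] m'_def[symmetric] \<Delta>_def[symmetric]
      dF_def[symmetric] S_def[symmetric] nn
    using part1 part2 by blast
qed


end
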